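(* Let $d\ge1$, $n>0$ and $N=(d+1)n+d-1$. The number of maximal $d$-Brauer relations of an $N$-gon is $\frac{1}{n+1}\binom{(d+1)n+d-1}{n}$.
   Context: Let $\Pi$ be an $N$-gon with vertices numbered clockwise $1,\dots,N$ (mod $N$). A $d$-diagonal is a diagonal joining vertices $i$ and $i+d+j(d+1)$ for some $0\le j\le n-1$. A $d$-Brauer relation is a set of pairwise disjoint $d$-diagonals, and it is maximal if it is maximal with respect to inclusion. *)

theory Defs
  imports Complex_Main
begin

text \<open>Vertices of the N-gon are 1..N, numbered clockwise; addition is modulo N
  with representatives in 1..N.\<close>
definition vadd :: "nat \<Rightarrow> nat \<Rightarrow> nat \<Rightarrow> nat" where
  "vadd N i k = ((i - 1 + k) mod N) + 1"

definition d_diagonal :: "nat \<Rightarrow> nat \<Rightarrow> nat \<Rightarrow> nat set \<Rightarrow> bool" where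
  "d_diagonal N d n D \<longleftrightarrow>
     (\<exists>i\<in>{1..N}. \<exists>j<n. D = {i, vadd N i (d + j * (d + 1))})"

definition crosses :: "nat set \<Rightarrow> nat set \<Rightarrow> bool" where
  "crosses D E \<longleftrightarrow> (\<exists>a b c e. D = {a, b} \<and> E = {c, e} \<and> a < c \<and> c < b \<and> b < e)"

definition diag_disjoint :: "nat set \<Rightarrow> nat set \<Rightarrow> bool" where
  "diag_disjoint D E \<longleftrightarrow> D \<inter> E = {} \<and> \<not> crosses D E \<and> \<not> crosses E D"

definition brauer_relation :: "nat \<Rightarrow> nat \<Rightarrow> nat \<Rightarrow> nat set set \<Rightarrow> bool" where
  "brauer_relation N d n R \<longleftrightarrow>
     (\<forall>D\<in>R. d_diagonal N d n D) \<and>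
     (\<forall>D\<in>R. \<forall>E\<in>R. D \<noteq> E \<longrightarrow> diag_disjoint D E)"

definition maximal_brauer_relation :: "nat \<Rightarrow> nat \<Rightarrow> nat \<Rightarrow> nat set set \<Rightarrow> bool" where
  "maximal_brauer_relation N d n R \<longleftrightarrow>
     brauer_relation N d n R \<and> (\<forall>S. brauer_relation N d n S \<and> R \<subseteq> S \<longrightarrow> S = R)"

end

theory Submission
  imports Defs
begin


definition pdisj :: "nat\<Rightarrow>nat\<Rightarrow>nat\<Rightarrow>nat\<Rightarrow>bool" where
  "pdisj x y u v \<longleftrightarrow> x\<noteq>u \<and> x\<noteq>v \<and> y\<noteq>u \<and> y\<noteq>v \<and> \<not>(x<u \<and> u<y \<and> y<v) \<and> \<not>(u<x \<and> x<v \<and> v<y)"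

definition pw_ok :: "(nat\<times>nat) set \<Rightarrow> bool" where
  "pw_ok P \<longleftrightarrow> (\<forall>x y u v. (x,y)\<in>P \<longrightarrow> (u,v)\<in>P \<longrightarrow> (x,y)\<noteq>(u,v) \<longrightarrow> pdisj x y u v)"

definition arcs_ok :: "nat \<Rightarrow> nat \<Rightarrow> nat \<Rightarrow> (nat\<times>nat) set \<Rightarrow> bool" where
  "arcs_ok d a b P \<longleftrightarrow> (\<forall>x y. (x,y)\<in>P \<longrightarrow> a \<le> x \<and> x<y \<and> y<b \<and> (d+1) dvd (y+1-x))"

definition brel :: "nat \<Rightarrow> nat \<Rightarrow> nat \<Rightarrow> (nat\<times>nat) set \<Rightarrow> bool" where
  "brel d a b P \<longleftrightarrow> arcs_ok d a b P \<and> pw_ok P"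

definition maxrel :: "nat \<Rightarrow> nat \<Rightarrow> nat \<Rightarrow> (nat\<times>nat) set \<Rightarrow> bool" where
  "maxrel d a b P \<longleftrightarrow> brel d a b P \<and> (\<forall>x y. (x,y)\<notin>P \<longrightarrow> \<not> brel d a b (insert (x,y) P))"

inductive Str :: "nat \<Rightarrow> nat \<Rightarrow> nat \<Rightarrow> nat \<Rightarrow> (nat\<times>nat) set \<Rightarrow> bool" for d where
  base: "Str d 0 a a {}"
| free: "Str d r (Suc a) b P \<Longrightarrow> r < d \<Longrightarrow> Str d (Suc r) a b P"
| match: "Str d (d-1) (Suc a) c P1 \<Longrightarrow> Str d r (Suc c) b P2 \<Longrightarrow> Str d r a b (insert (a,c) (P1 \<union> P2))"

lemma pdisj_sym: "pdisj x y u v = pdisj u v x y"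
  unfolding pdisj_def by auto

lemma Str_inv:
  assumes "Str d r a b P" "d \<ge> 1"
  shows "finite P \<and> (\<forall>x y. (x,y)\<in>P \<longrightarrow> a \<le> x \<and> x < y \<and> y < b \<and> (d+1) dvd (y+1-x))
         \<and> b = a + r + (d+1)*card P \<and> r \<le> d"
  using assms
proof (induction rule: Str.induct)
  case (base a)
  then show ?case by simp
next
  case (free r a b P)
  then show ?case by fastforce
next
  case (match a c P1 r b P2)
  have disj: "P1 \<inter> P2 = {}" using match by fastforce
  have nin: "(a,c) \<notin> P1 \<union> P2" using match by fastforce
  have fin: "finite (P1 \<union> P2)" using match by auto
  have cd: "card (insert (a,c) (P1 \<union> P2)) = Suc (card P1 + card P2)"
    using disj nin fin match by (simp add: card_Un_disjoint)
  have c_eq: "c = a + d + (d+1)*card P1" using match by simp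
  have dv: "(d+1) dvd (c+1-a)"
  proof -
    have "c + 1 - a = (d+1)*(Suc (card P1))" using c_eq by simp
    then show ?thesis by (metis dvd_triv_left)
  qed
  have arcs: "\<forall>x y. (x,y) \<in> insert (a, c) (P1 \<union> P2) \<longrightarrow> a \<le> x \<and> x < y \<and> y < b \<and> (d + 1) dvd (y + 1 - x)"
    using match dv c_eq by fastforce
  have bb: "b = a + r + (d + 1) * card (insert (a, c) (P1 \<union> P2))"
    using cd match c_eq by (simp add: algebra_simps)
  have "r \<le> d" using match by simp
  then show ?case using arcs bb fin by blast
qed

lemma Str_pw:
  assumes "Str d r a b P" "d \<ge> 1"
  shows "pw_ok P"
  using assms
proof (induction rule: Str.induct)
  case (base a)
  then show ?case by (simp add: pw_ok_def)
next
  case (free r a b P)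
  then show ?case by simp
next
  case (match a c P1 r b P2)
  have i1: "\<forall>x y. (x,y)\<in>P1 \<longrightarrow> Suc a \<le> x \<and> x < y \<and> y < c" using Str_inv[OF match(1) match(5)] by blast
  have i2: "\<forall>x y. (x,y)\<in>P2 \<longrightarrow> Suc c \<le> x \<and> x < y \<and> y < b" using Str_inv[OF match(2) match(5)] by blast
  have p1: "pw_ok P1" and p2: "pw_ok P2" using match by auto
  have ac: "a < c" using Str_inv[OF match(1) match(5)] by simp
  show ?case unfolding pw_ok_def
  proof (intro allI impI)
    fix x y u v assume A: "(x,y) \<in> insert (a,c) (P1 \<union> P2)" "(u,v) \<in> insert (a,c) (P1 \<union> P2)" "(x,y) \<noteq> (u,v)"
    show "pdisj x y u v"
      using A
    proof (elim insertE UnE)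
      assume "(x,y) = (a,c)" "(u,v) = (a,c)" then show ?thesis using A by simp
    next
      assume "(x,y) = (a,c)" "(u,v) \<in> P1" then show ?thesis using i1 unfolding pdisj_def by fastforce
    next
      assume "(x,y) = (a,c)" "(u,v) \<in> P2" then show ?thesis using i2 ac unfolding pdisj_def by fastforce
    next
      assume "(x,y) \<in> P1" "(u,v) = (a,c)" then show ?thesis using i1 unfolding pdisj_def by fastforce
    next
      assume "(x,y) \<in> P2" "(u,v) = (a,c)" then show ?thesis using i2 ac unfolding pdisj_def by fastforce
    next
      assume "(x,y) \<in> P1" "(u,v) \<in> P1" then show ?thesis using p1 A unfolding pw_ok_def by blast
    next
      assume "(x,y) \<in> P2" "(u,v) \<in> P2" then show ?thesis using p2 A unfolding pw_ok_def by blast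
    next
      assume "(x,y) \<in> P1" "(u,v) \<in> P2" then show ?thesis using i1 i2 unfolding pdisj_def by fastforce
    next
      assume "(x,y) \<in> P2" "(u,v) \<in> P1" then show ?thesis using i1 i2 unfolding pdisj_def by fastforce
    qed
  qed
qed

definition fr :: "nat \<Rightarrow> (nat\<times>nat) set \<Rightarrow> bool" where
  "fr y P \<longleftrightarrow> (\<forall>p q. (p,q)\<in>P \<longrightarrow> p\<noteq>y \<and> q\<noteq>y)"
definition tp :: "nat \<Rightarrow> (nat\<times>nat) set \<Rightarrow> bool" where
  "tp y P \<longleftrightarrow> (\<forall>p q. (p,q)\<in>P \<longrightarrow> \<not>(p<y \<and> y<q))"

lemma mod_Suc_small:
  assumes "m mod (d+1) < d"
  shows "(Suc m) mod (d+1) = Suc (m mod (d+1))"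
  using assms by (simp add: mod_Suc)

lemma mod_add_dvd:
  assumes "(k::nat) dvd c"
  shows "(x + c) mod k = x mod k"
  using assms by auto

lemma Str_I2:
  assumes "Str d r a b P" "d \<ge> 1"
  shows "a \<le> y \<Longrightarrow> y < b \<Longrightarrow> fr y P \<Longrightarrow> tp y P \<Longrightarrow>
          1 \<le> (y+1-a) mod (d+1) \<and> (y+1-a) mod (d+1) \<le> r"
  using assms
proof (induction arbitrary: y rule: Str.induct)
  case (base a)
  then show ?case by simp
next
  case (free r a b P)
  show ?case
  proof (cases "y = a")
    case True
    then show ?thesis using free by simp
  next
    case False
    then have "Suc a \<le> y" using free by simp
    then have ih: "1 \<le> (y+1-Suc a) mod (d+1) \<and> (y+1-Suc a) mod (d+1) \<le> r" using free by blast
    have e: "y + 1 - a = Suc (y + 1 - Suc a)" using \<open>Suc a \<le> y\<close> by simp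
    have "(y+1-a) mod (d+1) = Suc ((y+1-Suc a) mod (d+1))"
      unfolding e using ih free(2) by (intro mod_Suc_small) simp
    then show ?thesis using ih by simp
  qed
next
  case (match a c P1 r b P2)
  have i1: "\<forall>x y. (x,y)\<in>P1 \<longrightarrow> Suc a \<le> x \<and> x < y \<and> y < c" 
    and c_eq: "c = Suc a + (d-1) + (d+1)*card P1"
    using Str_inv[OF match(1) match(9)] by blast+
  have i2: "\<forall>x y. (x,y)\<in>P2 \<longrightarrow> Suc c \<le> x \<and> x < y \<and> y < b" using Str_inv[OF match(2) match(9)] by blast
  have "a \<noteq> y \<and> c \<noteq> y" using match(7) unfolding fr_def by blast
  moreover have "\<not> (a < y \<and> y < c)" using match(8) unfolding tp_def by blast
  ultimately have "y \<noteq> a" "y \<noteq> c" "\<not> (a < y \<and> y < c)" by auto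
  then have yc: "Suc c \<le> y" using match(5) by auto
  have "fr y P2" "tp y P2" using match(7,8) unfolding fr_def tp_def by auto
  then have ih: "1 \<le> (y+1-Suc c) mod (d+1) \<and> (y+1-Suc c) mod (d+1) \<le> r" using match yc by blast
  have "y + 1 - a = (y + 1 - Suc c) + (d+1)*(Suc (card P1))" using yc c_eq match(9) by simp
  then have "(y+1-a) mod (d+1) = (y+1-Suc c) mod (d+1)" by (simp only: mod_mult_self2)
  then show ?case using ih by simp
qed

lemma Str_I3:
  assumes "Str d r a b P" "d \<ge> 1"
  shows "a \<le> x \<Longrightarrow> x < y \<Longrightarrow> y < b \<Longrightarrow> (\<forall>p q. (p,q)\<in>P \<longrightarrow> pdisj x y p q) \<Longrightarrow>
          \<not> (d+1) dvd (y+1-x)"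
  using assms
proof (induction arbitrary: x y rule: Str.induct)
  case (base a)
  then show ?case by simp
next
  case (free r a b P)
  have iv: "\<forall>x y. (x,y)\<in>P \<longrightarrow> Suc a \<le> x \<and> x < y \<and> y < b" using Str_inv[OF free(1) free(8)] by blast
  show ?case
  proof (cases "x = a")
    case True
    have fy: "fr y P" using free(7) unfolding fr_def pdisj_def by auto
    have ty: "tp y P" using free(7) iv True unfolding tp_def pdisj_def
      by (metis Suc_le_eq)
    have ih: "1 \<le> (y+1-Suc a) mod (d+1) \<and> (y+1-Suc a) mod (d+1) \<le> r"
      using Str_I2[OF free(1) free(8), of y] fy ty free True by simp
    have e: "y + 1 - x = Suc (y + 1 - Suc a)" using True free by simp
    have "(y+1-x) mod (d+1) = Suc ((y+1-Suc a) mod (d+1))"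
      unfolding e using ih free(2) by (intro mod_Suc_small) simp
    then have "(y+1-x) mod (d+1) \<noteq> 0" by simp
    then show ?thesis by (simp add: dvd_eq_mod_eq_0)
  next
    case False
    then show ?thesis using free by simp
  qed
next
  case (match a c P1 r b P2)
  have i1: "\<forall>x y. (x,y)\<in>P1 \<longrightarrow> Suc a \<le> x \<and> x < y \<and> y < c" 
    using Str_inv[OF match(1) match(9)] by blast
  have i2: "\<forall>x y. (x,y)\<in>P2 \<longrightarrow> Suc c \<le> x \<and> x < y \<and> y < b" using Str_inv[OF match(2) match(9)] by blast
  have "pdisj x y a c" using match(8) by simp
  then have h: "x \<noteq> a" "x \<noteq> c" "y \<noteq> c" "\<not> (a < x \<and> x < c \<and> c < y)" unfolding pdisj_def by auto
  show ?case
  proof (cases "x < c")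
    case True
    then have "y < c" using h match by auto
    then show ?thesis using match h True by auto
  next
    case False
    then show ?thesis using match h by auto
  qed
qed

lemma Str_maxrel:
  assumes "Str d r a b P" "d \<ge> 1"
  shows "maxrel d a b P"
proof -
  have bP: "brel d a b P" using Str_inv[OF assms] Str_pw[OF assms]
    unfolding brel_def arcs_ok_def by blast
  show ?thesis unfolding maxrel_def
  proof (intro conjI bP allI impI notI)
    fix x y assume n: "(x,y) \<notin> P" and b2: "brel d a b (insert (x,y) P)"
    then have A: "a \<le> x" "x < y" "y < b" "(d+1) dvd (y+1-x)" unfolding brel_def arcs_ok_def by auto
    have "\<forall>p q. (p,q)\<in>P \<longrightarrow> pdisj x y p q" using b2 n unfolding brel_def pw_ok_def by auto
    then show False using Str_I3[OF assms A(1-3)] A(4) by blast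
  qed
qed

lemma Str_last:
  assumes "Str d r a b P" "d \<ge> 1"
  shows "1 \<le> r \<Longrightarrow> \<exists>y. a \<le> y \<and> y < b \<and> fr y P \<and> tp y P \<and> (y+1-a) mod (d+1) = r"
  using assms
proof (induction rule: Str.induct)
  case (base a)
  then show ?case by simp
next
  case (free r a b P)
  have iv: "\<forall>x y. (x,y)\<in>P \<longrightarrow> Suc a \<le> x \<and> x < y \<and> y < b" and bb: "b = Suc a + r + (d+1)*card P"
    using Str_inv[OF free(1) free(5)] by blast+
  show ?case
  proof (cases "r = 0")
    case True
    have "fr a P" "tp a P" using iv unfolding fr_def tp_def by fastforce+
    moreover have "(a+1-a) mod (d+1) = Suc r" using True free by simp
    ultimately show ?thesis using bb by (intro exI[of _ a]) auto
  next
    case False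
    then obtain y where y: "Suc a \<le> y" "y < b" "fr y P" "tp y P" "(y+1-Suc a) mod (d+1) = r"
      using free by auto
    have e: "y + 1 - a = Suc (y + 1 - Suc a)" using y by simp
    have "(y+1-a) mod (d+1) = Suc r"
      unfolding e using y free(2) by (subst mod_Suc_small) auto
    then show ?thesis using y by (intro exI[of _ y]) auto
  qed
next
  case (match a c P1 r b P2)
  have i1: "\<forall>x y. (x,y)\<in>P1 \<longrightarrow> Suc a \<le> x \<and> x < y \<and> y < c" 
    and c_eq: "c = Suc a + (d-1) + (d+1)*card P1"
    using Str_inv[OF match(1) match(6)] by blast+
  obtain y where y: "Suc c \<le> y" "y < b" "fr y P2" "tp y P2" "(y+1-Suc c) mod (d+1) = r"
    using match by auto
  have "y + 1 - a = (y + 1 - Suc c) + (d+1)*(Suc (card P1))" using y c_eq match(6) by simp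
  then have "(y+1-a) mod (d+1) = (y+1-Suc c) mod (d+1)" by (simp only: mod_mult_self2)
  then have "(y+1-a) mod (d+1) = r" using y by simp
  moreover have "fr y (insert (a,c) (P1 \<union> P2))" using y i1 c_eq unfolding fr_def by fastforce
  moreover have "tp y (insert (a,c) (P1 \<union> P2))" using y i1 c_eq unfolding tp_def by fastforce
  ultimately show ?case using y c_eq by (intro exI[of _ y]) auto
qed

lemma brel_insert:
  assumes "brel d a b P" "a \<le> x" "x < y" "y < b" "(d+1) dvd (y+1-x)"
    "\<forall>p q. (p,q)\<in>P \<longrightarrow> pdisj x y p q"
  shows "brel d a b (insert (x,y) P)"
  using assms unfolding brel_def arcs_ok_def pw_ok_def
  by (metis insert_iff old.prod.inject pdisj_sym)

lemma brel_mono: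
  assumes "brel d a b P" "a' \<le> a" "b \<le> b'" shows "brel d a' b' P"
  using assms unfolding brel_def arcs_ok_def by fastforce

lemma brel_sub:
  assumes "brel d a b P" "Q \<subseteq> P" "\<forall>x y. (x,y)\<in>Q \<longrightarrow> a' \<le> x \<and> y < b'"
  shows "brel d a' b' Q"
  using assms unfolding brel_def arcs_ok_def pw_ok_def by blast

lemma maxrel_Str_aux:
  assumes "d \<ge> 1"
  shows "b - a = m \<Longrightarrow> a \<le> b \<Longrightarrow> maxrel d a b P \<Longrightarrow> Str d ((b-a) mod (d+1)) a b P"
proof (induction m arbitrary: a b P rule: less_induct)
  case (less m)
  have bP: "brel d a b P" using less.prems unfolding maxrel_def by blast
  have arcs: "\<And>x y. (x,y)\<in>P \<Longrightarrow> a \<le> x \<and> x<y \<and> y<b \<and> (d+1) dvd (y+1-x)"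
    using bP unfolding brel_def arcs_ok_def by blast
  have pw: "\<And>x y u v. (x,y)\<in>P \<Longrightarrow> (u,v)\<in>P \<Longrightarrow> (x,y)\<noteq>(u,v) \<Longrightarrow> pdisj x y u v"
    using bP unfolding brel_def pw_ok_def by blast
  have mx: "\<And>x y. (x,y)\<notin>P \<Longrightarrow> \<not> brel d a b (insert (x,y) P)"
    using less.prems unfolding maxrel_def by blast
  show ?case
  proof (cases "a = b")
    case True
    then have "P = {}" using arcs by fastforce
    then show ?thesis using True by (simp add: Str.base)
  next
    case False
    then have ab: "a < b" using less.prems by simp
    show ?thesis
    proof (cases "\<exists>c. (a,c) \<in> P")
      case True
      then obtain c where acP: "(a,c) \<in> P" by blast
      have ac: "a < c" "c < b" "(d+1) dvd (c+1-a)" using arcs[OF acP] by auto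
      define P1 where "P1 = {p\<in>P. a < fst p \<and> snd p < c}"
      define P2 where "P2 = {p\<in>P. c < fst p}"
      have Peq: "P = insert (a,c) (P1 \<union> P2)"
      proof (rule set_eqI, rule iffI)
        fix p assume pP: "p \<in> P"
        obtain x y where p: "p = (x,y)" by (cases p)
        show "p \<in> insert (a,c) (P1 \<union> P2)"
        proof (cases "p = (a,c)")
          case True then show ?thesis by simp
        next
          case False
          then have pd: "pdisj a c x y" using pw[OF acP, of x y] pP p by auto
          have "a \<le> x" "x < y" using arcs pP p by auto
          then show ?thesis using pd pP p unfolding P1_def P2_def pdisj_def by auto
        qed
      next
        fix p assume "p \<in> insert (a,c) (P1 \<union> P2)"
        then show "p \<in> P" using acP unfolding P1_def P2_def by auto
      qed
      have P1s: "P1 \<subseteq> P" and P2s: "P2 \<subseteq> P" unfolding P1_def P2_def by auto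
      have b1: "brel d (Suc a) c P1"
        by (rule brel_sub[OF bP P1s]) (auto simp: P1_def)
      have b2: "brel d (Suc c) b P2"
        by (rule brel_sub[OF bP P2s]) (use arcs in \<open>fastforce simp: P2_def\<close>)
      have m1: "maxrel d (Suc a) c P1" unfolding maxrel_def
      proof (intro conjI b1 allI impI notI)
        fix x y assume n1: "(x,y) \<notin> P1" and bi: "brel d (Suc a) c (insert (x,y) P1)"
        have xy: "Suc a \<le> x" "x < y" "y < c" "(d+1) dvd (y+1-x)"
          using bi unfolding brel_def arcs_ok_def by auto
        have "(x,y) \<notin> P" using n1 xy unfolding P1_def by auto
        moreover have "brel d a b (insert (x,y) P)"
        proof (rule brel_insert[OF bP])
          show "a \<le> x" "x < y" "y < b" "(d+1) dvd (y+1-x)" using xy ac by auto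
          show "\<forall>p q. (p,q)\<in>P \<longrightarrow> pdisj x y p q"
          proof (intro allI impI)
            fix p q assume pq: "(p,q) \<in> P"
            show "pdisj x y p q"
            proof (cases "(p,q) \<in> P1")
              case True
              then show ?thesis using bi n1 unfolding brel_def pw_ok_def by (metis insertCI)
            next
              case False
              then have "(p,q) = (a,c) \<or> (p,q) \<in> P2" using pq Peq by auto
              then show ?thesis
              proof
                assume "(p,q) = (a,c)" then show ?thesis using xy unfolding pdisj_def by auto
              next
                assume "(p,q) \<in> P2" then have "c < p" "p < q" using arcs unfolding P2_def by auto
                then show ?thesis using xy unfolding pdisj_def by auto
              qed
            qed
          qed
        qed
        ultimately show False using mx by blast
      qed
      have m2: "maxrel d (Suc c) b P2" unfolding maxrel_def
      proof (intro conjI b2 allI impI notI)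
        fix x y assume n1: "(x,y) \<notin> P2" and bi: "brel d (Suc c) b (insert (x,y) P2)"
        have xy: "Suc c \<le> x" "x < y" "y < b" "(d+1) dvd (y+1-x)"
          using bi unfolding brel_def arcs_ok_def by auto
        have "(x,y) \<notin> P" using n1 xy unfolding P2_def by auto
        moreover have "brel d a b (insert (x,y) P)"
        proof (rule brel_insert[OF bP])
          show "a \<le> x" "x < y" "y < b" "(d+1) dvd (y+1-x)" using xy ac by auto
          show "\<forall>p q. (p,q)\<in>P \<longrightarrow> pdisj x y p q"
          proof (intro allI impI)
            fix p q assume pq: "(p,q) \<in> P"
            show "pdisj x y p q"
            proof (cases "(p,q) \<in> P2")
              case True
              then show ?thesis using bi n1 unfolding brel_def pw_ok_def by (metis insertCI)
            next
              case False
              then have "(p,q) = (a,c) \<or> (p,q) \<in> P1" using pq Peq by auto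
              then show ?thesis
              proof
                assume "(p,q) = (a,c)" then show ?thesis using xy ac unfolding pdisj_def by auto
              next
                assume "(p,q) \<in> P1" then have "q < c" "p < q" using arcs unfolding P1_def by auto
                then show ?thesis using xy unfolding pdisj_def by auto
              qed
            qed
          qed
        qed
        ultimately show False using mx by blast
      qed
      obtain t where t: "c + 1 - a = (d+1)*t" using ac(3) by (auto simp: dvd_def)
      have t1: "t \<ge> 1" using t ac by (cases t) auto
      then obtain s where ts: "t = Suc s" by (cases t) auto
      have e0: "c + 1 - a = (d+1)*s + (d+1)" using t ts by simp
      have e1: "c - Suc a = (d - 1) + (d+1)*s"
        using e0 ac assms by linarith
      have r1: "(c - Suc a) mod (d+1) = d - 1" unfolding e1 
        using assms by (simp only: mod_mult_self2) simp
      have e2: "b - a = (b - Suc c) + (d+1)*t" using t ac by simp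
      have r2: "(b - Suc c) mod (d+1) = (b - a) mod (d+1)" unfolding e2 by (simp only: mod_mult_self2)
      have S1: "Str d (d-1) (Suc a) c P1"
      proof -
        have "c - Suc a < m" using ac less.prems by simp
        from less.IH[OF this refl] show ?thesis using m1 r1 ac by simp
      qed
      have S2: "Str d ((b-a) mod (d+1)) (Suc c) b P2"
      proof -
        have "b - Suc c < m" using ac less.prems by simp
        from less.IH[OF this refl] show ?thesis using m2 r2 ac by simp
      qed
      show ?thesis using Str.match[OF S1 S2] Peq by simp
    next
      case False
      then have afree: "\<And>c. (a,c) \<notin> P" by blast
      have arcs': "\<And>x y. (x,y)\<in>P \<Longrightarrow> Suc a \<le> x"
        using arcs afree by (metis Suc_leI le_neq_implies_less)
      have b1: "brel d (Suc a) b P" by (rule brel_sub[OF bP]) (use arcs arcs' in auto)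
      have m1: "maxrel d (Suc a) b P" unfolding maxrel_def
      proof (intro conjI b1 allI impI notI)
        fix x y assume "(x,y) \<notin> P" "brel d (Suc a) b (insert (x,y) P)"
        then show False using mx brel_mono[of d "Suc a" b "insert (x,y) P" a b] by auto
      qed
      have S: "Str d ((b - Suc a) mod (d+1)) (Suc a) b P"
      proof -
        have "b - Suc a < m" using ab less.prems by simp
        from less.IH[OF this refl] show ?thesis using m1 ab by simp
      qed
      have eb: "b - a = Suc (b - Suc a)" using ab by simp
      show ?thesis
      proof (cases "(b - Suc a) mod (d+1) < d")
        case True
        have "(b - a) mod (d+1) = Suc ((b - Suc a) mod (d+1))"
          unfolding eb using True by (rule mod_Suc_small)
        then show ?thesis using Str.free[OF S True] by simp
      next
        case False
        moreover have "(b - Suc a) mod (d+1) < d + 1" by simp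
        ultimately have rd: "(b - Suc a) mod (d+1) = d" by linarith
        obtain y where y: "Suc a \<le> y" "y < b" "fr y P" "tp y P" "(y+1-Suc a) mod (d+1) = d"
          using Str_last[OF S assms] rd assms by auto
        have ey: "y + 1 - a = Suc (y + 1 - Suc a)" using y by simp
        have "(y + 1 - a) mod (d+1) = 0" unfolding ey using y(5) by (simp add: mod_Suc)
        then have dv: "(d+1) dvd (y+1-a)" by (simp add: dvd_eq_mod_eq_0)
        have "brel d a b (insert (a,y) P)"
        proof (rule brel_insert[OF bP])
          show "a \<le> a" "a < y" "y < b" "(d+1) dvd (y+1-a)" using y dv by auto
          show "\<forall>p q. (p,q)\<in>P \<longrightarrow> pdisj a y p q"
          proof (intro allI impI)
            fix p q assume pq: "(p,q) \<in> P"
            have "Suc a \<le> p" "p < q" using arcs[OF pq] arcs'[OF pq] by auto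
            moreover have "p \<noteq> y" "q \<noteq> y" using y(3) pq unfolding fr_def by auto
            moreover have "\<not> (p < y \<and> y < q)" using y(4) pq unfolding tp_def by auto
            ultimately show "pdisj a y p q" unfolding pdisj_def by auto
          qed
        qed
        then show ?thesis using mx afree by blast
      qed
    qed
  qed
qed



fun pc :: "nat \<Rightarrow> nat \<Rightarrow> nat \<Rightarrow> nat" where
  "pc d r 0 = 1"
| "pc d 0 (Suc k) = pc d d k"
| "pc d (Suc r) (Suc k) = pc d r (Suc k) + pc d (Suc r + d) k"

lemma pc_rec: "pc d r k = (if r = 0 \<and> k = 0 then 1 else 0) + (if r \<ge> 1 then pc d (r-1) k else 0)
   + (if k \<ge> 1 then pc d (r+d) (k-1) else 0)"
  by (cases r; cases k) auto

lemma pc_conv: "(\<Sum>i\<le>k. pc d a i * pc d b (k-i)) = pc d (a+b+1) k"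
proof (induction k arbitrary: a b)
  case 0
  then show ?case by simp
next
  case (Suc k)
  note outer = Suc.IH
  show ?case
  proof (induction a arbitrary: b)
    case 0
    have "(\<Sum>i\<le>Suc k. pc d 0 i * pc d b (Suc k - i)) = pc d 0 0 * pc d b (Suc k) + (\<Sum>i\<le>k. pc d 0 (Suc i) * pc d b (Suc k - Suc i))"
      by (subst sum.atMost_Suc_shift) simp
    also have "\<dots> = pc d b (Suc k) + (\<Sum>i\<le>k. pc d d i * pc d b (k - i))" by simp
    also have "\<dots> = pc d b (Suc k) + pc d (d+b+1) k" using outer by simp
    also have "\<dots> = pc d (0+b+1) (Suc k)" by (simp add: algebra_simps)
    finally show ?case .
  next
    case (Suc a)
    have "(\<Sum>i\<le>Suc k. pc d (Suc a) i * pc d b (Suc k - i)) = pc d (Suc a) 0 * pc d b (Suc k) + (\<Sum>i\<le>k. pc d (Suc a) (Suc i) * pc d b (Suc k - Suc i))"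
      by (subst sum.atMost_Suc_shift) simp
    also have "\<dots> = pc d b (Suc k) + (\<Sum>i\<le>k. pc d a (Suc i) * pc d b (k - i)) + (\<Sum>i\<le>k. pc d (Suc a + d) i * pc d b (k - i))"
      by (simp add: sum.distrib algebra_simps)
    also have "\<dots> = (\<Sum>i\<le>Suc k. pc d a i * pc d b (Suc k - i)) + pc d (Suc a + d + b + 1) k"
      using outer[of "Suc a + d" b] by (subst sum.atMost_Suc_shift) simp
    also have "\<dots> = pc d (a+b+1) (Suc k) + pc d (Suc a + d + b + 1) k"
      using Suc.IH[of b] by simp
    also have "\<dots> = pc d (Suc a + b + 1) (Suc k)" by (simp add: algebra_simps)
    finally show ?case .
  qed
qed

lemma pc_closed: "((d+1)*k + r + 1) * pc d r k = (r+1) * (((d+1)*k + r + 1) choose k)"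
proof (induction d r k rule: pc.induct)
  case (1 d r)
  then show ?case by simp
next
  case (2 d k)
  define M where "M = (d+1)*(Suc k)"
  have IH: "M * pc d d k = (d+1) * (M choose k)"
    using 2 unfolding M_def by (simp add: algebra_simps)
  have "(d+1) * ((Suc k) * pc d d k) = (d+1) * (M choose k)" using IH unfolding M_def mult.assoc .
  then have "(Suc k) * pc d d k = (M choose k)" by (subst (asm) mult_left_cancel) simp_all
  then have "Suc M * ((Suc k) * pc d d k) = (Suc M choose Suc k) * Suc k"
    using Suc_times_binomial_eq[of M k] by simp
  then have "Suc k * (Suc M * pc d d k) = Suc k * (Suc M choose Suc k)"
    by (metis mult.commute mult.left_commute)
  then have "Suc M * pc d d k = (Suc M choose Suc k)" by (subst (asm) mult_left_cancel) simp_all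
  then show ?case unfolding M_def by (simp add: algebra_simps)
next
  case (3 d r k)
  define M where "M = (d+1)*(Suc k) + r + 1"
  define C where "C = (Suc M choose Suc k)"
  have IH1: "M * pc d r (Suc k) = (r+1) * (M choose Suc k)"
    using 3(1) unfolding M_def by (simp add: algebra_simps)
  have IH2: "M * pc d (Suc r + d) k = (r+d+2) * (M choose k)"
    using 3(2) unfolding M_def by (simp add: algebra_simps)
  have B1: "Suc M * (M choose k) = C * Suc k" unfolding C_def by (rule Suc_times_binomial_eq)
  have B2: "(Suc M - Suc k) * C = Suc M * (M choose Suc k)"
    unfolding C_def using binomial_absorb_comp[of "Suc M" "Suc k"] by simp
  have e: "Suc M - Suc k = d*(Suc k) + r + 2" unfolding M_def by simp
  have "M * (Suc M * pc d (Suc r) (Suc k)) = Suc M * (M * pc d r (Suc k)) + Suc M * (M * pc d (Suc r + d) k)"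
    by (simp add: algebra_simps)
  also have "\<dots> = (r+1) * (Suc M * (M choose Suc k)) + (r+d+2) * (Suc M * (M choose k))"
    unfolding IH1 IH2 by (simp add: algebra_simps)
  also have "\<dots> = (r+1) * ((d*(Suc k) + r + 2) * C) + (r+d+2) * (C * Suc k)"
    unfolding B1 B2[symmetric] e by simp
  also have "\<dots> = M * ((r+2) * C)" unfolding M_def by (simp add: algebra_simps)
  finally have h: "M * (Suc M * pc d (Suc r) (Suc k)) = M * ((r+2) * C)" .
  have M0: "M \<noteq> 0" unfolding M_def by simp
  have "Suc M * pc d (Suc r) (Suc k) = (r+2) * C" by (metis h M0 mult_left_cancel)
  then show ?case unfolding M_def C_def by (simp add: algebra_simps)
qed



lemma Str_fin: "d \<ge> 1 \<Longrightarrow> finite {P. Str d r a b P}"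
proof -
  assume d: "d \<ge> 1"
  have "{P. Str d r a b P} \<subseteq> Pow ({a..<b} \<times> {a..<b})"
  proof
    fix P assume "P \<in> {P. Str d r a b P}"
    then have "\<forall>x y. (x,y)\<in>P \<longrightarrow> a \<le> x \<and> x < y \<and> y < b" using Str_inv[OF _ d] by blast
    then show "P \<in> Pow ({a..<b} \<times> {a..<b})" by fastforce
  qed
  then show ?thesis by (rule finite_subset) simp
qed

lemma Str_empty: "d \<ge> 1 \<Longrightarrow> \<not>(\<exists>k. b = a + r + (d+1)*k) \<Longrightarrow> {P. Str d r a b P} = {}"
proof -
  assume d: "d \<ge> 1" and n: "\<not>(\<exists>k. b = a + r + (d+1)*k)"
  { fix P assume "Str d r a b P"
    then have "b = a + r + (d+1)*card P" using Str_inv[OF _ d] by blast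
    then have False using n by blast }
  then show ?thesis by blast
qed

definition glue :: "nat \<Rightarrow> nat \<Rightarrow> (nat\<times>nat) set \<times> (nat\<times>nat) set \<Rightarrow> (nat\<times>nat) set" where
  "glue a c = (\<lambda>(P1,P2). insert (a,c) (P1 \<union> P2))"

lemma Str_decomp:
  assumes d: "d \<ge> 1"
  shows "{P. Str d r a b P} = (if r = 0 \<and> a = b then {{}} else {})
     \<union> (if r \<ge> 1 \<and> r - 1 < d then {P. Str d (r-1) (Suc a) b P} else {})
     \<union> (\<Union>c\<in>{a<..<b}. glue a c ` ({P. Str d (d-1) (Suc a) c P} \<times> {P. Str d r (Suc c) b P}))"
proof (rule set_eqI, rule iffI)
  fix P assume "P \<in> {P. Str d r a b P}"
  then have "Str d r a b P" by simp
  then show "P \<in> (if r = 0 \<and> a = b then {{}} else {})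
     \<union> (if r \<ge> 1 \<and> r - 1 < d then {P. Str d (r-1) (Suc a) b P} else {})
     \<union> (\<Union>c\<in>{a<..<b}. glue a c ` ({P. Str d (d-1) (Suc a) c P} \<times> {P. Str d r (Suc c) b P}))"
  proof (cases rule: Str.cases)
    case base
    then show ?thesis by simp
  next
    case (free r' )
    then show ?thesis by simp
  next
    case (match c P1 P2)
    have "a < c" "c < b" using Str_inv[OF match(2) d] Str_inv[OF match(3) d] by auto
    moreover have "P = glue a c (P1, P2)" using match unfolding glue_def by simp
    ultimately have "P \<in> glue a c ` ({P. Str d (d-1) (Suc a) c P} \<times> {P. Str d r (Suc c) b P})"
      using match by (intro image_eqI[of _ _ "(P1,P2)"]) auto
    then show ?thesis using \<open>a < c\<close> \<open>c < b\<close> by (intro UnI2 UN_I[of c]) auto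
  qed
next
  fix P assume "P \<in> (if r = 0 \<and> a = b then {{}} else {})
     \<union> (if r \<ge> 1 \<and> r - 1 < d then {P. Str d (r-1) (Suc a) b P} else {})
     \<union> (\<Union>c\<in>{a<..<b}. glue a c ` ({P. Str d (d-1) (Suc a) c P} \<times> {P. Str d r (Suc c) b P}))"
  then show "P \<in> {P. Str d r a b P}"
  proof (elim UnE)
    assume "P \<in> (if r = 0 \<and> a = b then {{}} else {})"
    then show ?thesis by (auto split: if_splits intro: Str.base)
  next
    assume "P \<in> (if r \<ge> 1 \<and> r - 1 < d then {P. Str d (r-1) (Suc a) b P} else {})"
    then show ?thesis using Str.free[of d "r-1" a b P] by (auto split: if_splits)
  next
    assume "P \<in> (\<Union>c\<in>{a<..<b}. glue a c ` ({P. Str d (d-1) (Suc a) c P} \<times> {P. Str d r (Suc c) b P}))"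
    then obtain c P1 P2 where "Str d (d-1) (Suc a) c P1" "Str d r (Suc c) b P2" "P = insert (a,c) (P1 \<union> P2)"
      unfolding glue_def by auto
    then show ?thesis using Str.match by blast
  qed
qed

lemma part1:
  fixes P1 P2 :: "(nat \<times> nat) set"
  assumes "\<forall>x y. (x,y)\<in>P1 \<longrightarrow> x < y \<and> y < c" "\<forall>x y. (x,y)\<in>P2 \<longrightarrow> c < x \<and> x < y"
  shows "P1 = {p \<in> insert (a,c) (P1 \<union> P2). snd p < c}"
proof (rule set_eqI)
  fix p :: "nat \<times> nat"
  obtain x y :: nat where p: "p = (x,y)" by (cases p)
  show "p \<in> P1 \<longleftrightarrow> p \<in> {p \<in> insert (a,c) (P1 \<union> P2). snd p < c}"
    unfolding p using assms[rule_format, of x y] by auto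
qed

lemma part2:
  fixes P1 P2 :: "(nat \<times> nat) set"
  assumes "\<forall>x y. (x,y)\<in>P1 \<longrightarrow> x < y \<and> y < c" "\<forall>x y. (x,y)\<in>P2 \<longrightarrow> c < x \<and> x < y"
    and "a < c"
  shows "P2 = {p \<in> insert (a,c) (P1 \<union> P2). c < fst p}"
proof (rule set_eqI)
  fix p :: "nat \<times> nat"
  obtain x y :: nat where p: "p = (x,y)" by (cases p)
  show "p \<in> P2 \<longleftrightarrow> p \<in> {p \<in> insert (a,c) (P1 \<union> P2). c < fst p}"
    unfolding p using assms(1,2)[rule_format, of x y] assms(3) by auto
qed

lemma glue_inj:
  assumes d: "d \<ge> 1"
  shows "inj_on (glue a c) ({P. Str d (d-1) (Suc a) c P} \<times> {P. Str d r (Suc c) b P})"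
proof (rule inj_onI)
  fix X Y assume X: "X \<in> {P. Str d (d-1) (Suc a) c P} \<times> {P. Str d r (Suc c) b P}"
    and Y: "Y \<in> {P. Str d (d-1) (Suc a) c P} \<times> {P. Str d r (Suc c) b P}" and e: "glue a c X = glue a c Y"
  obtain P1 P2 where X': "X = (P1,P2)" by (cases X)
  obtain Q1 Q2 where Y': "Y = (Q1,Q2)" by (cases Y)
  have i1: "\<forall>x y. (x,y)\<in>P1 \<longrightarrow> Suc a \<le> x \<and> x < y \<and> y < c" using Str_inv[OF _ d] X X' by blast
  have i2: "\<forall>x y. (x,y)\<in>P2 \<longrightarrow> Suc c \<le> x \<and> x < y \<and> y < b" using Str_inv[OF _ d] X X' by blast
  have j1: "\<forall>x y. (x,y)\<in>Q1 \<longrightarrow> Suc a \<le> x \<and> x < y \<and> y < c" using Str_inv[OF _ d] Y Y' by blast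
  have j2: "\<forall>x y. (x,y)\<in>Q2 \<longrightarrow> Suc c \<le> x \<and> x < y \<and> y < b" using Str_inv[OF _ d] Y Y' by blast
  have E: "insert (a,c) (P1 \<union> P2) = insert (a,c) (Q1 \<union> Q2)" using e X' Y' unfolding glue_def by simp
  have h1: "\<forall>x y. (x,y)\<in>P1 \<longrightarrow> x < y \<and> y < c" "\<forall>x y. (x,y)\<in>P2 \<longrightarrow> c < x \<and> x < y"
    using i1 i2 by (meson Suc_le_eq)+
  have h2: "\<forall>x y. (x,y)\<in>Q1 \<longrightarrow> x < y \<and> y < c" "\<forall>x y. (x,y)\<in>Q2 \<longrightarrow> c < x \<and> x < y"
    using j1 j2 by (meson Suc_le_eq)+
  have ac: "a < c" using Str_inv[OF _ d] X X' by fastforce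
  have "P1 = Q1" using part1[OF h1, of a] part1[OF h2, of a] E by simp
  moreover have "P2 = Q2" using part2[OF h1 ac] part2[OF h2 ac] E by simp
  ultimately show "X = Y" using X' Y' by simp
qed

lemma card_glue:
  assumes d: "d \<ge> 1"
  shows "card (\<Union>c\<in>{a<..<b}. glue a c ` ({P. Str d (d-1) (Suc a) c P} \<times> {P. Str d r (Suc c) b P}))
    = (\<Sum>c\<in>{a<..<b}. card {P. Str d (d-1) (Suc a) c P} * card {P. Str d r (Suc c) b P})"
proof -
  have "card (\<Union>c\<in>{a<..<b}. glue a c ` ({P. Str d (d-1) (Suc a) c P} \<times> {P. Str d r (Suc c) b P}))
      = (\<Sum>c\<in>{a<..<b}. card (glue a c ` ({P. Str d (d-1) (Suc a) c P} \<times> {P. Str d r (Suc c) b P})))"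
  proof (rule card_UN_disjoint)
    show "finite {a<..<b}" by simp
    show "\<forall>c\<in>{a<..<b}. finite (glue a c ` ({P. Str d (d-1) (Suc a) c P} \<times> {P. Str d r (Suc c) b P}))"
      using Str_fin[OF d] by auto
    show "\<forall>c\<in>{a<..<b}. \<forall>c'\<in>{a<..<b}. c \<noteq> c' \<longrightarrow>
      glue a c ` ({P. Str d (d-1) (Suc a) c P} \<times> {P. Str d r (Suc c) b P}) \<inter>
      glue a c' ` ({P. Str d (d-1) (Suc a) c' P} \<times> {P. Str d r (Suc c') b P}) = {}"
    proof (intro ballI impI)
      fix c c' :: nat assume cc: "c \<noteq> c'"
      show "glue a c ` ({P. Str d (d-1) (Suc a) c P} \<times> {P. Str d r (Suc c) b P}) \<inter>
      glue a c' ` ({P. Str d (d-1) (Suc a) c' P} \<times> {P. Str d r (Suc c') b P}) = {}"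
      proof (rule ccontr)
        assume "\<not> ?thesis"
        then obtain P1 P2 Q1 Q2 where A: "Str d (d-1) (Suc a) c P1" "Str d r (Suc c) b P2"
          "Str d (d-1) (Suc a) c' Q1" "Str d r (Suc c') b Q2"
          "insert (a,c) (P1 \<union> P2) = insert (a,c') (Q1 \<union> Q2)"
          unfolding glue_def by auto
        have j1: "\<forall>x y. (x,y)\<in>P1 \<longrightarrow> Suc a \<le> x" using Str_inv[OF A(1) d] by blast
        have j2: "\<forall>x y. (x,y)\<in>P2 \<longrightarrow> Suc c \<le> x" using Str_inv[OF A(2) d] by blast
        have ac: "a < c" using Str_inv[OF A(1) d] by simp
        have i1: "\<forall>x y. (x,y)\<in>P1 \<union> P2 \<longrightarrow> Suc a \<le> x" using j1 j2 ac by fastforce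
        have "(a,c') \<in> insert (a,c) (P1 \<union> P2)" using A(5) by simp
        then have "(a,c') \<in> P1 \<union> P2" using cc by simp
        then have "Suc a \<le> a" using i1 by blast
        then show False by simp
      qed
    qed
  qed
  also have "\<dots> = (\<Sum>c\<in>{a<..<b}. card {P. Str d (d-1) (Suc a) c P} * card {P. Str d r (Suc c) b P})"
  proof (rule sum.cong[OF refl])
    fix c assume "c \<in> {a<..<b}"
    show "card (glue a c ` ({P. Str d (d-1) (Suc a) c P} \<times> {P. Str d r (Suc c) b P})) =
        card {P. Str d (d-1) (Suc a) c P} * card {P. Str d r (Suc c) b P}"
    proof -
      have "inj_on (glue a c) ({P. Str d (d-1) (Suc a) c P} \<times> {P. Str d r (Suc c) b P})"
        by (rule glue_inj[OF d])
      then show ?thesis by (simp only: card_image card_cartesian_product)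
    qed
  qed
  finally show ?thesis .
qed

lemma sum_reindex_c:
  assumes d: "d \<ge> 1" and r: "r \<le> d" and b: "b = a + r + (d+1)*k"
  shows "(\<Sum>c\<in>{a<..<b}. card {P. Str d (d-1) (Suc a) c P} * card {P. Str d r (Suc c) b P})
       = (\<Sum>i<k. card {P. Str d (d-1) (Suc a) (a + d + (d+1)*i) P} * card {P. Str d r (Suc (a + d + (d+1)*i)) b P})"
proof -
  define g where "g c = card {P. Str d (d-1) (Suc a) c P} * card {P. Str d r (Suc c) b P}" for c
  define \<phi> where "\<phi> i = a + d + (d+1)*i" for i
  have sub: "\<phi> ` {..<k} \<subseteq> {a<..<b}"
  proof
    fix c assume "c \<in> \<phi> ` {..<k}"
    then obtain i where i: "i < k" "c = \<phi> i" by auto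
    then obtain j where kj: "k = Suc (i + j)" by (metis less_iff_Suc_add)
    have "b = c + r + 1 + (d+1)*j" using b i kj unfolding \<phi>_def by (simp add: algebra_simps)
    then show "c \<in> {a<..<b}" using i d unfolding \<phi>_def by auto
  qed
  have zero: "g c = 0" if c: "c \<in> {a<..<b} - \<phi> ` {..<k}" for c
  proof -
    have "{P. Str d (d-1) (Suc a) c P} = {}"
    proof (rule Str_empty[OF d], rule notI)
      assume "\<exists>j. c = Suc a + (d-1) + (d+1)*j"
      then obtain j where j: "c = Suc a + (d-1) + (d+1)*j" by blast
      then have cj: "c = \<phi> j" unfolding \<phi>_def using d by simp
      have "j < k"
      proof (rule ccontr)
        assume "\<not> j < k"
        then have "(d+1)*k \<le> (d+1)*j" by (intro mult_le_mono2) simp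
        then show False using c cj b r unfolding \<phi>_def by auto
      qed
      then show False using c cj by auto
    qed
    then have "card {P. Str d (d-1) (Suc a) c P} = 0" by (simp only: card.empty)
    then show ?thesis unfolding g_def by simp
  qed
  have "(\<Sum>c\<in>{a<..<b}. g c) = (\<Sum>c\<in>\<phi> ` {..<k}. g c)"
    by (rule sum.mono_neutral_right[OF _ sub]) (use zero in auto)
  also have "\<dots> = (\<Sum>i<k. g (\<phi> i))"
  proof (rule sum.reindex_cong[of \<phi>])
    show "inj_on \<phi> {..<k}"
    proof (rule inj_onI)
      fix x y assume "\<phi> x = \<phi> y"
      then have "(d+1)*x = (d+1)*y" unfolding \<phi>_def by linarith
      then show "x = y" by (metis mult_left_cancel Suc_eq_plus1 nat.distinct(1))
    qed
  qed auto
  finally show ?thesis unfolding g_def \<phi>_def .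
qed

lemma Str_count_step:
  assumes d: "d \<ge> 1" and r: "r \<le> d" and b: "b = a + r + (d+1)*k"
    and IHk: "\<And>k' r a b. k' < k \<Longrightarrow> r \<le> d \<Longrightarrow> b = a + r + (d+1)*k' \<Longrightarrow> card {P. Str d r a b P} = pc d r k'"
    and IHr: "r \<ge> 1 \<Longrightarrow> card {P. Str d (r-1) (Suc a) b P} = pc d (r-1) k"
  shows "card {P. Str d r a b P} = pc d r k"
proof -
  define A :: "(nat\<times>nat) set set" where "A = (if r = 0 \<and> a = b then {{}} else {})"
  define B where "B = (if r \<ge> 1 \<and> r - 1 < d then {P. Str d (r-1) (Suc a) b P} else {})"
  define C where "C = (\<Union>c\<in>{a<..<b}. glue a c ` ({P. Str d (d-1) (Suc a) c P} \<times> {P. Str d r (Suc c) b P}))"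
  have dec: "{P. Str d r a b P} = A \<union> B \<union> C" unfolding A_def B_def C_def by (rule Str_decomp[OF d])
  have finS: "finite {P. Str d r a b P}" by (rule Str_fin[OF d])
  have finA: "finite A" unfolding A_def by simp
  have finB: "finite B" unfolding B_def using Str_fin[OF d] by simp
  have finC: "finite C" using finS dec by (metis finite_Un)
  have AB: "A \<inter> B = {}" unfolding A_def B_def by auto
  have CC: "\<exists>c. (a,c) \<in> X" if "X \<in> C" for X using that unfolding C_def glue_def by auto
  have ABC: "(A \<union> B) \<inter> C = {}"
  proof (rule ccontr)
    assume "(A \<union> B) \<inter> C \<noteq> {}"
    then obtain X where X: "X \<in> A \<union> B" "X \<in> C" by blast
    then obtain c where c: "(a,c) \<in> X" using CC by blast
    show False
    proof (cases "X \<in> A")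
      case True then show False using c unfolding A_def by (auto split: if_splits)
    next
      case False
      then have "X \<in> B" using X by blast
      then have "Str d (r-1) (Suc a) b X" unfolding B_def by (auto split: if_splits)
      then have "\<forall>x y. (x,y)\<in>X \<longrightarrow> Suc a \<le> x" using Str_inv[OF _ d] by blast
      then show False using c by fastforce
    qed
  qed
  have "card {P. Str d r a b P} = card A + card B + card C"
    unfolding dec using finA finB finC AB ABC by (simp add: card_Un_disjoint)
  moreover have "card A = (if r = 0 \<and> k = 0 then 1 else 0)" unfolding A_def using b by auto
  moreover have "card B = (if r \<ge> 1 then pc d (r-1) k else 0)" unfolding B_def using IHr r by auto
  moreover have "card C = (if k \<ge> 1 then pc d (r+d) (k-1) else 0)"
  proof -
    have "card C = (\<Sum>i<k. card {P. Str d (d-1) (Suc a) (a + d + (d+1)*i) P} * card {P. Str d r (Suc (a + d + (d+1)*i)) b P})"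
      unfolding C_def card_glue[OF d] by (rule sum_reindex_c[OF d r b])
    also have "\<dots> = (\<Sum>i<k. pc d (d-1) i * pc d r (k - 1 - i))"
    proof (rule sum.cong[OF refl])
      fix i assume "i \<in> {..<k}"
      then have i: "i < k" by simp
      then obtain j where kj: "k = Suc (i + j)" by (metis less_iff_Suc_add)
      have e1: "a + d + (d+1)*i = Suc a + (d-1) + (d+1)*i" using d by simp
      have e2: "b = Suc (a + d + (d+1)*i) + r + (d+1)*(k - 1 - i)" using b kj by (simp add: algebra_simps)
      show "card {P. Str d (d-1) (Suc a) (a + d + (d+1)*i) P} * card {P. Str d r (Suc (a + d + (d+1)*i)) b P}
          = pc d (d-1) i * pc d r (k - 1 - i)"
        using IHk[OF i _ e1] IHk[OF _ r e2] kj by simp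
    qed
    also have "\<dots> = (if k \<ge> 1 then pc d (r+d) (k-1) else 0)"
    proof (cases k)
      case 0 then show ?thesis by simp
    next
      case (Suc k')
      have "(\<Sum>i<k. pc d (d-1) i * pc d r (k - 1 - i)) = (\<Sum>i\<le>k'. pc d (d-1) i * pc d r (k' - i))"
        using Suc by (simp add: lessThan_Suc_atMost)
      also have "\<dots> = pc d (d - 1 + r + 1) k'" by (rule pc_conv)
      also have "\<dots> = pc d (r+d) k'" using d by (simp add: algebra_simps)
      finally show ?thesis using Suc by simp
    qed
    finally show ?thesis .
  qed
  ultimately show ?thesis by (subst pc_rec) simp
qed

lemma Str_count:
  assumes d: "d \<ge> 1"
  shows "r \<le> d \<Longrightarrow> b = a + r + (d+1)*k \<Longrightarrow> card {P. Str d r a b P} = pc d r k"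
proof (induction k arbitrary: r a b rule: less_induct)
  case (less k)
  note outer = less.IH
  show ?case using less.prems
  proof (induction r arbitrary: a b)
    case 0
    show ?case by (rule Str_count_step[OF d 0(1) 0(2) outer]) auto
  next
    case (Suc r)
    show ?case
    proof (rule Str_count_step[OF d Suc(2) Suc(3) outer])
      have "r \<le> d" "b = Suc a + r + (d+1)*k" using Suc.prems by auto
      then show "card {P. Str d (Suc r - 1) (Suc a) b P} = pc d (Suc r - 1) k"
        using Suc.IH[where a="Suc a" and b=b] by simp
    qed auto
  qed
qed



lemma G1_fwd:
  assumes d: "d \<ge> 1" and n: "n > 0" and N: "N = (d + 1) * n + d - 1"
    and D: "d_diagonal N d n D"
  shows "\<exists>x y. D = {x,y} \<and> 1 \<le> x \<and> x < y \<and> y \<le> N \<and> (d+1) dvd (y+1-x)"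
proof -
  obtain i j where i: "i \<in> {1..N}" and j: "j < n" and De: "D = {i, vadd N i (d + j*(d+1))}"
    using D unfolding d_diagonal_def by blast
  define k where "k = d + j*(d+1)"
  obtain m where nm: "n = Suc (j + m)" using j by (metis less_iff_Suc_add)
  have Ne: "N = (d+1)*j + (d+1)*m + (d+1) + d - 1" using N nm by (simp add: algebra_simps)
  have ke: "k = (d+1)*j + d" unfolding k_def by (simp add: algebra_simps)
  have kN: "k + d \<le> N" using Ne ke d by simp
  show ?thesis
  proof (cases "i + k \<le> N")
    case True
    have "vadd N i k = i + k" unfolding vadd_def using True i d by simp
    moreover have "(d+1) dvd (i + k + 1 - i)"
    proof -
      have "i + k + 1 - i = (d+1)*(Suc j)" using ke by simp
      then show ?thesis by (metis dvd_triv_left)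
    qed
    ultimately show ?thesis using De True i d unfolding k_def[symmetric]
      by (intro exI[of _ i] exI[of _ "i+k"]) auto
  next
    case False
    have lt: "i - 1 + k < N + N" using i kN d by (simp only: atLeastAtMost_iff) linarith
    have ge: "N \<le> i - 1 + k" using False i by simp
    have "(i - 1 + k) mod N = i - 1 + k - N"
    proof -
      have "(i - 1 + k) mod N = ((i - 1 + k - N) + N) mod N" using ge by simp
      also have "\<dots> = (i - 1 + k - N) mod N" by simp
      also have "\<dots> = i - 1 + k - N" using lt ge by simp
      finally show ?thesis .
    qed
    then have va: "vadd N i k = i + k - N" unfolding vadd_def using i ge by (simp only: atLeastAtMost_iff) linarith
    have dv: "(d+1) dvd (i + 1 - (i + k - N))"
    proof -
      have "i + 1 - (i + k - N) = (d+1)*(Suc m)" using Ne ke False i d by simp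
      then show ?thesis by (metis dvd_triv_left)
    qed
    have "D = {i + k - N, i}" using De va unfolding k_def[symmetric] by auto
    then show ?thesis using dv False i kN d
      by (intro exI[of _ "i + k - N"] exI[of _ i]) auto
  qed
qed

lemma G1_bwd:
  assumes d: "d \<ge> 1" and n: "n > 0" and N: "N = (d + 1) * n + d - 1"
    and xy: "1 \<le> x" "x < y" "y \<le> N" "(d+1) dvd (y+1-x)"
  shows "d_diagonal N d n {x,y}"
proof -
  obtain t where t: "y + 1 - x = (d+1)*t" using xy(4) by (auto simp: dvd_def)
  have t1: "t \<ge> 1" using t xy by (cases t) auto
  then obtain j where tj: "t = Suc j" by (cases t) auto
  have "j < n"
  proof (rule ccontr)
    assume "\<not> j < n"
    then have "(d+1)*n \<le> (d+1)*j" by (intro mult_le_mono2) simp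
    moreover have "y + 1 - x = (d+1)*j + (d+1)" using t tj by simp
    ultimately show False using xy N d by linarith
  qed
  moreover have "vadd N x (d + j*(d+1)) = y"
  proof -
    have "d + j*(d+1) = y - x" using t tj xy by (simp add: algebra_simps)
    then have "x - 1 + (d + j*(d+1)) = y - 1" using xy by simp
    then show ?thesis unfolding vadd_def using xy by simp
  qed
  moreover have "x \<in> {1..N}" using xy by simp
  ultimately show ?thesis unfolding d_diagonal_def by metis
qed

lemma doubleton_ord:
  fixes x y u v :: nat
  assumes "x < y" "u < v" "{x,y} = {u,v}" shows "x = u \<and> y = v"
  using assms by (metis doubleton_eq_iff less_asym)

lemma crosses_pair:
  fixes x y u v :: nat
  assumes "x < y" "u < v"
  shows "crosses {x,y} {u,v} \<longleftrightarrow> (x < u \<and> u < y \<and> y < v)"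
proof
  assume "crosses {x,y} {u,v}"
  then obtain a b c e where h: "{x,y} = {a,b}" "{u,v} = {c,e}" "a < c" "c < b" "b < e"
    unfolding crosses_def by blast
  have "x = a \<and> y = b" using doubleton_ord[OF assms(1) _ h(1)] h by simp
  moreover have "u = c \<and> v = e" using doubleton_ord[OF assms(2) _ h(2)] h by simp
  ultimately show "x < u \<and> u < y \<and> y < v" using h by simp
next
  assume "x < u \<and> u < y \<and> y < v"
  then show "crosses {x,y} {u,v}" unfolding crosses_def by blast
qed

lemma disj_pair:
  fixes x y u v :: nat
  assumes "x < y" "u < v"
  shows "diag_disjoint {x,y} {u,v} \<longleftrightarrow> pdisj x y u v"
  unfolding diag_disjoint_def crosses_pair[OF assms] crosses_pair[OF assms(2,1)] pdisj_def
  by auto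

definition ordp :: "(nat\<times>nat) set \<Rightarrow> bool" where
  "ordp P \<longleftrightarrow> (\<forall>x y. (x,y)\<in>P \<longrightarrow> x < y)"

definition phi :: "(nat\<times>nat) set \<Rightarrow> nat set set" where
  "phi P = (\<lambda>(x,y). {x,y}) ` P"

lemma phi_mem: "ordp P \<Longrightarrow> x < y \<Longrightarrow> {x,y} \<in> phi P \<longleftrightarrow> (x,y) \<in> P"
  unfolding phi_def ordp_def using doubleton_ord by fastforce

lemma phi_inj: "inj_on phi {P. ordp P}"
proof (rule inj_onI)
  fix P Q assume P: "P \<in> {P. ordp P}" and Q: "Q \<in> {P. ordp P}" and e: "phi P = phi Q"
  show "P = Q"
  proof (rule set_eqI)
    fix p :: "nat \<times> nat"
    obtain x y :: nat where p: "p = (x,y)" by (cases p)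
    show "p \<in> P \<longleftrightarrow> p \<in> Q"
    proof
      assume "p \<in> P"
      then have "x < y" "{x,y} \<in> phi P" using P p unfolding ordp_def phi_def by auto
      then show "p \<in> Q" using phi_mem[of Q x y] Q e p by simp
    next
      assume "p \<in> Q"
      then have "x < y" "{x,y} \<in> phi Q" using Q p unfolding ordp_def phi_def by auto
      then show "p \<in> P" using phi_mem[of P x y] P e p by simp
    qed
  qed
qed

lemma brauer_iff:
  assumes d: "d \<ge> 1" and n: "n > 0" and N: "N = (d + 1) * n + d - 1" and o: "ordp P"
  shows "brauer_relation N d n (phi P) \<longleftrightarrow> brel d 1 (N+1) P"
proof -
  have A: "(\<forall>D\<in>phi P. d_diagonal N d n D) \<longleftrightarrow> arcs_ok d 1 (N+1) P"
  proof
    assume h: "\<forall>D\<in>phi P. d_diagonal N d n D"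
    show "arcs_ok d 1 (N+1) P" unfolding arcs_ok_def
    proof (intro allI impI)
      fix x y assume xy: "(x,y) \<in> P"
      then have "d_diagonal N d n {x,y}" using h unfolding phi_def by auto
      then obtain x' y' where h2: "{x,y} = {x',y'}" "1 \<le> x'" "x' < y'" "y' \<le> N" "(d+1) dvd (y'+1-x')"
        using G1_fwd[OF d n N] by blast
      have "x < y" using o xy unfolding ordp_def by blast
      then have "x = x' \<and> y = y'" using doubleton_ord[OF _ h2(3) h2(1)] by blast
      then show "1 \<le> x \<and> x < y \<and> y < N + 1 \<and> (d+1) dvd (y+1-x)" using h2 by auto
    qed
  next
    assume h: "arcs_ok d 1 (N+1) P"
    show "\<forall>D\<in>phi P. d_diagonal N d n D"
    proof
      fix D assume "D \<in> phi P"
      then obtain x y where xy: "(x,y) \<in> P" "D = {x,y}" unfolding phi_def by auto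
      have "1 \<le> x \<and> x < y \<and> y < N+1 \<and> (d+1) dvd (y+1-x)" using h[unfolded arcs_ok_def, rule_format, OF xy(1)] by simp
      then have "1 \<le> x" "x < y" "y \<le> N" "(d+1) dvd (y+1-x)" by auto
      then have "d_diagonal N d n {x,y}" by (rule G1_bwd[OF d n N])
      then show "d_diagonal N d n D" using xy(2) by simp
    qed
  qed
  have B: "(\<forall>D\<in>phi P. \<forall>E\<in>phi P. D \<noteq> E \<longrightarrow> diag_disjoint D E) \<longleftrightarrow> pw_ok P"
  proof
    assume h: "\<forall>D\<in>phi P. \<forall>E\<in>phi P. D \<noteq> E \<longrightarrow> diag_disjoint D E"
    show "pw_ok P" unfolding pw_ok_def
    proof (intro allI impI)
      fix x y u v assume a: "(x,y) \<in> P" "(u,v) \<in> P" "(x,y) \<noteq> (u,v)"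
      have o2: "x < y" "u < v" using a o unfolding ordp_def by auto
      have "{x,y} \<noteq> {u,v}" using doubleton_ord[OF o2] a(3) by auto
      moreover have "{x,y} \<in> phi P" "{u,v} \<in> phi P" using a unfolding phi_def by auto
      ultimately have "diag_disjoint {x,y} {u,v}" using h[rule_format, of "{x,y}" "{u,v}"] by simp
      then show "pdisj x y u v" using disj_pair[OF o2] by simp
    qed
  next
    assume h: "pw_ok P"
    show "\<forall>D\<in>phi P. \<forall>E\<in>phi P. D \<noteq> E \<longrightarrow> diag_disjoint D E"
    proof (intro ballI impI)
      fix D E assume "D \<in> phi P" "E \<in> phi P" "D \<noteq> E"
      then obtain x y u v where a: "(x,y) \<in> P" "(u,v) \<in> P" "D = {x,y}" "E = {u,v}" "(x,y) \<noteq> (u,v)"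
        unfolding phi_def by auto
      have o2: "x < y" "u < v" using a o unfolding ordp_def by auto
      have "pdisj x y u v" using h a unfolding pw_ok_def by blast
      then show "diag_disjoint D E" using disj_pair[OF o2] a by simp
    qed
  qed
  show ?thesis unfolding brauer_relation_def brel_def using A B by blast
qed



lemma maxrel_set:
  assumes d: "d \<ge> 1" and n: "n > 0" and N: "N = (d + 1) * n + d - 1"
  shows "{R. maximal_brauer_relation N d n R} = phi ` {P. maxrel d 1 (N+1) P}"
proof (rule set_eqI, rule iffI)
  fix R assume "R \<in> {R. maximal_brauer_relation N d n R}"
  then have mR: "maximal_brauer_relation N d n R" by simp
  then have bR: "brauer_relation N d n R" unfolding maximal_brauer_relation_def by blast
  define P where "P = {(x,y). x < y \<and> {x,y} \<in> R}"
  have oP: "ordp P" unfolding ordp_def P_def by auto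
  have RP: "R = phi P"
  proof (rule set_eqI, rule iffI)
    fix D assume "D \<in> R"
    then have "d_diagonal N d n D" using bR unfolding brauer_relation_def by blast
    then obtain x y where "D = {x,y}" "x < y" using G1_fwd[OF d n N] by blast
    then show "D \<in> phi P" using \<open>D \<in> R\<close> unfolding P_def phi_def by auto
  next
    fix D assume "D \<in> phi P"
    then show "D \<in> R" unfolding P_def phi_def by auto
  qed
  have "maxrel d 1 (N+1) P" unfolding maxrel_def
  proof (intro conjI allI impI notI)
    show "brel d 1 (N+1) P" using bR RP brauer_iff[OF d n N oP] by simp
  next
    fix x y assume nP: "(x,y) \<notin> P" and b2: "brel d 1 (N+1) (insert (x,y) P)"
    have xy: "x < y" using b2 unfolding brel_def arcs_ok_def by auto
    have o2: "ordp (insert (x,y) P)" using oP xy unfolding ordp_def by auto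
    have "brauer_relation N d n (phi (insert (x,y) P))" using brauer_iff[OF d n N o2] b2 by simp
    moreover have "R \<subseteq> phi (insert (x,y) P)" using RP unfolding phi_def by auto
    ultimately have "phi (insert (x,y) P) = R" using mR unfolding maximal_brauer_relation_def by blast
    then have "{x,y} \<in> R" unfolding phi_def by auto
    then show False using nP xy unfolding P_def by auto
  qed
  then show "R \<in> phi ` {P. maxrel d 1 (N+1) P}" using RP by blast
next
  fix R assume "R \<in> phi ` {P. maxrel d 1 (N+1) P}"
  then obtain P where RP: "R = phi P" and mP: "maxrel d 1 (N+1) P" by blast
  have bP: "brel d 1 (N+1) P" using mP unfolding maxrel_def by blast
  have oP: "ordp P" using bP unfolding brel_def arcs_ok_def ordp_def by blast
  have bR: "brauer_relation N d n R" using brauer_iff[OF d n N oP] bP RP by simp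
  have "maximal_brauer_relation N d n R" unfolding maximal_brauer_relation_def
  proof (intro conjI bR allI impI)
    fix S assume S: "brauer_relation N d n S \<and> R \<subseteq> S"
    show "S = R"
    proof (rule ccontr)
      assume "S \<noteq> R"
      then obtain D where DS: "D \<in> S" and DR: "D \<notin> R" using S by blast
      have "d_diagonal N d n D" using S DS unfolding brauer_relation_def by blast
      then obtain x y where Dxy: "D = {x,y}" and xy: "x < y" using G1_fwd[OF d n N] by blast
      have nP: "(x,y) \<notin> P" using DR Dxy RP unfolding phi_def by auto
      have o2: "ordp (insert (x,y) P)" using oP xy unfolding ordp_def by auto
      have sub: "phi (insert (x,y) P) \<subseteq> S" using S RP DS Dxy unfolding phi_def by auto
      have "brauer_relation N d n (phi (insert (x,y) P))"
        using S sub unfolding brauer_relation_def by blast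
      then have "brel d 1 (N+1) (insert (x,y) P)" using brauer_iff[OF d n N o2] by simp
      then show False using mP nP unfolding maxrel_def by blast
    qed
  qed
  then show "R \<in> {R. maximal_brauer_relation N d n R}" by simp
qed

lemma card_final:
  assumes d: "d \<ge> 1" and n: "n > 0" and N: "N = (d + 1) * n + d - 1"
  shows "card {R. maximal_brauer_relation N d n R} = pc d (d-1) n"
proof -
  have "{P. maxrel d 1 (N+1) P} \<subseteq> {P. ordp P}"
    unfolding maxrel_def brel_def arcs_ok_def ordp_def by blast
  then have "inj_on phi {P. maxrel d 1 (N+1) P}" using phi_inj inj_on_subset by blast
  then have "card {R. maximal_brauer_relation N d n R} = card {P. maxrel d 1 (N+1) P}"
    unfolding maxrel_set[OF d n N] by (rule card_image)
  also have "{P. maxrel d 1 (N+1) P} = {P. Str d (d-1) 1 (N+1) P}"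
  proof (rule set_eqI, rule iffI)
    fix P assume "P \<in> {P. maxrel d 1 (N+1) P}"
    then have mP: "maxrel d 1 (N+1) P" by simp
    have "Str d ((N+1-1) mod (d+1)) 1 (N+1) P"
      by (rule maxrel_Str_aux[OF d refl]) (use mP in auto)
    moreover have "(N+1-1) mod (d+1) = d - 1"
    proof -
      have "N + 1 - 1 = (d - 1) + (d+1)*n" using N d by simp
      then show ?thesis using d by (simp only: mod_mult_self2) simp
    qed
    ultimately show "P \<in> {P. Str d (d-1) 1 (N+1) P}" by simp
  next
    fix P assume "P \<in> {P. Str d (d-1) 1 (N+1) P}"
    then show "P \<in> {P. maxrel d 1 (N+1) P}" using Str_maxrel[OF _ d] by simp
  qed
  also have "card {P. Str d (d-1) 1 (N+1) P} = pc d (d-1) n"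
    by (rule Str_count[OF d]) (use N d in simp_all)
  finally show ?thesis .
qed

lemma pc_final:
  assumes d: "d \<ge> 1"
  shows "real (pc d (d-1) n) = 1 / real (n + 1) * real (((d + 1) * n + d - 1) choose n)"
proof -
  define L where "L = (d+1)*n + d"
  have L0: "L \<noteq> 0" unfolding L_def using d by simp
  have c1: "L * pc d (d-1) n = d * (L choose n)"
    using pc_closed[of d n "d-1"] d unfolding L_def by simp
  have c2: "(L - n) * (L choose n) = L * ((L - 1) choose n)" by (rule binomial_absorb_comp)
  have e: "L - n = d * (n+1)" unfolding L_def by (simp add: algebra_simps)
  have "L * ((n+1) * pc d (d-1) n) = L * ((L - 1) choose n)"
  proof -
    have "L * ((n+1) * pc d (d-1) n) = (n+1) * (L * pc d (d-1) n)" by (simp add: algebra_simps)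
    also have "\<dots> = (n+1) * (d * (L choose n))" using c1 by simp
    also have "\<dots> = (L - n) * (L choose n)" using e by (simp add: algebra_simps)
    finally show ?thesis using c2 by simp
  qed
  then have "(n+1) * pc d (d-1) n = (L - 1) choose n" using L0 by simp
  moreover have "L - 1 = (d + 1) * n + d - 1" unfolding L_def by simp
  ultimately have "(n+1) * pc d (d-1) n = ((d + 1) * n + d - 1) choose n" by simp
  then have "real (n+1) * real (pc d (d-1) n) = real (((d + 1) * n + d - 1) choose n)"
    by (metis of_nat_mult)
  then show ?thesis by (simp add: field_simps)
qed

theorem theorem8p19:
  fixes d n N :: nat
  assumes "d \<ge> 1" and "n > 0" and "N = (d + 1) * n + d - 1"
  shows "real (card {R. maximal_brauer_relation N d n R})
           = 1 / real (n + 1) * real (((d + 1) * n + d - 1) choose n)"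
  using card_final[OF assms] pc_final[OF assms(1)] by simp

end
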